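(* For every integer $d\ge3$, the set $\mathfrak P_d$ is contained in $[0,2d-4]^{2d-4}\times[-d+2,d-2]$; hence $\mathfrak P_d$ is a bounded convex polytope and $\mathfrak P_d\cap\mathbb Z^{2d-3}$ is finite.
   Context: $\mathfrak P_d\subseteq\mathbb R^{2d-3}$ is the set of all $(x_1,\dots,x_{d-2},y_1,\dots,y_{d-2},z)\in\mathbb R^{2d-3}$ satisfying: $x_j-x_{j+1}\ge0$ and $y_j-y_{j+1}\ge0$ for $j\in\{1,\dots,d-3\}$; $x_j\ge0$, $y_j\ge0$ for $j\in\{1,\dots,d-2\}$; $j(z+d-1-j)+\sum_{i=0}^{j-2}x_{d-2-i}-\sum_{i=1}^{j}y_i\ge0$ for $j\in\{1,\dots,d-2\}$; and $\sum_{i=1}^{d-2}y_i-\sum_{i=1}^{d-2}x_i=z(d-1)$. *)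

theory Defs
  imports "HOL-Analysis.Analysis"
begin

text \<open>Points of R^(2d-3) are modelled as vectors p :: real^'n, where the finite index
type 'n is ordered by a bijection e from {0..<2d-3}. Coordinate k (0-based) is p $ e k.
Thus x_j = p $ e (j-1) (1 <= j <= d-2), y_j = p $ e (d-3+j), z = p $ e (2d-4).\<close>

definition xc :: "nat \<Rightarrow> (nat \<Rightarrow> 'n) \<Rightarrow> real^'n \<Rightarrow> nat \<Rightarrow> real" where
  "xc d e p j = p $ e (j - 1)"

definition yc :: "nat \<Rightarrow> (nat \<Rightarrow> 'n) \<Rightarrow> real^'n \<Rightarrow> nat \<Rightarrow> real" where
  "yc d e p j = p $ e (d - 3 + j)"

definition zc :: "nat \<Rightarrow> (nat \<Rightarrow> 'n) \<Rightarrow> real^'n \<Rightarrow> real" where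
  "zc d e p = p $ e (2 * d - 4)"

definition Pd :: "nat \<Rightarrow> (nat \<Rightarrow> 'n::finite) \<Rightarrow> (real^'n) set" where
  "Pd d e = {p.
     (\<forall>j\<in>{1..d-3}. xc d e p j - xc d e p (j+1) \<ge> 0 \<and> yc d e p j - yc d e p (j+1) \<ge> 0) \<and>
     (\<forall>j\<in>{1..d-2}. xc d e p j \<ge> 0 \<and> yc d e p j \<ge> 0) \<and>
     (\<forall>j\<in>{1..d-2}. real j * (zc d e p + real d - 1 - real j)
          + (\<Sum>i\<in>{0..<j-1}. xc d e p (d - 2 - i)) - (\<Sum>i\<in>{1..j}. yc d e p i) \<ge> 0) \<and>
     (\<Sum>i\<in>{1..d-2}. yc d e p i) - (\<Sum>i\<in>{1..d-2}. xc d e p i) = zc d e p * (real d - 1)}"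

end

theory Submission imports Defs begin
lemma lin_poly_ge:
  fixes f :: "'a::euclidean_space \<Rightarrow> real"
  assumes "bounded_linear f" shows "polyhedron {x. f x \<ge> c}"
proof -
  define a where "a = (\<Sum>b\<in>Basis. f b *\<^sub>R b)"
  have lf: "linear f" using assms bounded_linear.linear by blast
  have "f x = a \<bullet> x" for x
  proof -
    have "f x = f (\<Sum>b\<in>Basis. (x \<bullet> b) *\<^sub>R b)" by (simp add: euclidean_representation)
    also have "\<dots> = (\<Sum>b\<in>Basis. (x \<bullet> b) * f b)"
      using lf by (simp add: linear_sum linear_scale)
    also have "\<dots> = a \<bullet> x" unfolding a_def inner_sum_left by (rule sum.cong) (auto simp: inner_commute)
    finally show ?thesis .
  qed
  then show ?thesis using polyhedron_halfspace_ge[of c a] by simp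
qed

lemma poly_Pd:
  fixes e :: "nat \<Rightarrow> 'n::finite"
  shows "polyhedron (Pd d e)"
proof -
  let ?X = "\<lambda>p::real^'n. (\<Sum>i\<in>{1..d-2}. p $ e (i - 1))"
  let ?Y = "\<lambda>p::real^'n. (\<Sum>i\<in>{1..d-2}. p $ e (d - 3 + i))"
  define A where "A = (\<Inter>j\<in>{1..d-3}. {p::real^'n. p $ e (j-1) - p $ e (j+1-1) \<ge> 0} \<inter> {p. p $ e (d-3+j) - p $ e (d-3+(j+1)) \<ge> 0})"
  define B where "B = (\<Inter>j\<in>{1..d-2}. {p::real^'n. p $ e (j-1) \<ge> 0} \<inter> {p. p $ e (d-3+j) \<ge> 0})"
  define C where "C = (\<Inter>j\<in>{1..d-2}. {p::real^'n. real j * p $ e (2*d-4) + (\<Sum>i\<in>{0..<j-1}. p $ e (d - 2 - i - 1)) - (\<Sum>i\<in>{1..j}. p $ e (d - 3 + i)) \<ge> - (real j * (real d - 1 - real j))})"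
  define D where "D = {p::real^'n. ?Y p - ?X p - p $ e (2*d-4) * (real d - 1) \<ge> 0} \<inter> {p. -(?Y p - ?X p - p $ e (2*d-4) * (real d - 1)) \<ge> 0}"
  have "Pd d e = A \<inter> B \<inter> C \<inter> D"
    unfolding Pd_def A_def B_def C_def D_def xc_def yc_def zc_def
    by (auto simp: algebra_simps)
  moreover have "polyhedron A" unfolding A_def
    by (intro polyhedron_Inter finite_imageI finite_atLeastAtMost) (elim imageE, hypsubst, intro polyhedron_Int lin_poly_ge bounded_linear_sub bounded_linear_vec_nth)
  moreover have "polyhedron B" unfolding B_def
    by (intro polyhedron_Inter finite_imageI finite_atLeastAtMost) (elim imageE, hypsubst, intro polyhedron_Int lin_poly_ge bounded_linear_sub bounded_linear_vec_nth)
  moreover have "polyhedron C" unfolding C_def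
    by (intro polyhedron_Inter finite_imageI finite_atLeastAtMost) (elim imageE, hypsubst, intro polyhedron_Int lin_poly_ge bounded_linear_sub bounded_linear_add bounded_linear_sum bounded_linear_const_mult bounded_linear_vec_nth)
  moreover have "polyhedron D" unfolding D_def
    by (intro polyhedron_Int lin_poly_ge bounded_linear_sub bounded_linear_minus bounded_linear_sum bounded_linear_mult_const bounded_linear_vec_nth)
  ultimately show ?thesis by simp
qed
lemma sum_rev_aux: "(\<Sum>i\<in>{0..<m::nat}. f (m + 1 - i)) = (\<Sum>k\<in>{2..m+1}. (f k :: real))"
  by (rule sum.reindex_bij_witness[of _ "\<lambda>k. m + 1 - k" "\<lambda>i. m + 1 - i"]) auto

lemma box_Pd:
  fixes e :: "nat \<Rightarrow> 'n::finite"
  assumes d: "d \<ge> 3" and p: "p \<in> Pd d e"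
  shows "(\<forall>k<2*d-4. 0 \<le> p $ e k \<and> p $ e k \<le> 2 * real d - 4) \<and>
         - real d + 2 \<le> p $ e (2*d-4) \<and> p $ e (2*d-4) \<le> real d - 2"
proof -
  define x where "x = xc d e p"
  define y where "y = yc d e p"
  define z where "z = zc d e p"
  have mono: "\<And>j. j\<in>{1..d-3} \<Longrightarrow> x (j+1) \<le> x j \<and> y (j+1) \<le> y j"
    using p unfolding Pd_def x_def y_def by auto
  have nn: "\<And>j. j\<in>{1..d-2} \<Longrightarrow> x j \<ge> 0 \<and> y j \<ge> 0"
    using p unfolding Pd_def x_def y_def by auto
  have cj: "\<And>j. j\<in>{1..d-2} \<Longrightarrow> real j * (z + real d - 1 - real j)
          + (\<Sum>i\<in>{0..<j-1}. x (d - 2 - i)) - (\<Sum>i\<in>{1..j}. y i) \<ge> 0"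
    using p unfolding Pd_def x_def y_def z_def by auto
  have eq: "(\<Sum>i\<in>{1..d-2}. y i) - (\<Sum>i\<in>{1..d-2}. x i) = z * (real d - 1)"
    using p unfolding Pd_def x_def y_def z_def by auto
  have xm: "1 \<le> j \<Longrightarrow> j \<le> d - 2 \<Longrightarrow> x j \<le> x 1" for j
  proof (induction j)
    case 0 then show ?case by simp
  next
    case (Suc j)
    show ?case
    proof (cases "j = 0")
      case False
      then have "j \<in> {1..d-3}" using Suc.prems by auto
      then show ?thesis using mono[of j] Suc by auto
    qed simp
  qed
  have ym: "1 \<le> j \<Longrightarrow> j \<le> d - 2 \<Longrightarrow> y j \<le> y 1" for j
  proof (induction j)
    case 0 then show ?case by simp
  next
    case (Suc j)
    show ?case
    proof (cases "j = 0")
      case False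
      then have "j \<in> {1..d-3}" using Suc.prems by auto
      then show ?thesis using mono[of j] Suc by auto
    qed simp
  qed
  have c1: "y 1 \<le> z + real d - 2" using cj[of 1] d by auto
  have cn0: "real (d-2) * (z + real d - 1 - real (d-2))
          + (\<Sum>i\<in>{0..<d-2-1}. x (d - 2 - i)) - (\<Sum>i\<in>{1..d-2}. y i) \<ge> 0"
    using cj[of "d-2"] d by auto
  have r: "(\<Sum>i\<in>{0..<d-2-1}. x (d - 2 - i)) = (\<Sum>k\<in>{2..d-2}. x k)"
  proof -
    obtain m where m: "d = m + 3" using d by (metis add.commute le_iff_add)
    have a: "d-2-1 = m" "\<And>i. d - 2 - i = m + 1 - i" using m by auto
    show ?thesis unfolding a using sum_rev_aux[of x m] m by simp
  qed
  have sx: "(\<Sum>i\<in>{1..d-2}. x i) = x 1 + (\<Sum>k\<in>{2..d-2}. x k)"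
    using d by (simp add: sum.atLeast_Suc_atMost numeral_eq_Suc)
  have rd: "real (d-2) = real d - 2" using d by simp
  have cn: "x 1 \<le> real d - 2 - z"
    using cn0 eq unfolding r rd using sx by (simp add: algebra_simps)
  have x1: "x 1 \<ge> 0" "y 1 \<ge> 0" using nn[of 1] d by auto
  have A: "\<forall>k<2*d-4. 0 \<le> p $ e k \<and> p $ e k \<le> 2 * real d - 4"
  proof (intro allI impI)
    fix k assume k: "k < 2*d-4"
    show "0 \<le> p $ e k \<and> p $ e k \<le> 2 * real d - 4"
    proof (cases "k < d - 2")
      case True
      have "p $ e k = x (k+1)" by (simp add: x_def xc_def)
      then show ?thesis using nn[of "k+1"] xm[of "k+1"] True cn c1 x1 by auto
    next
      case False
      have "p $ e k = y (k+3-d)" using False d by (simp add: y_def yc_def)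
      moreover have "1 \<le> k+3-d" "k+3-d \<le> d-2" using False k d by auto
      ultimately show ?thesis using nn[of "k+3-d"] ym[of "k+3-d"] cn c1 x1 by auto
    qed
  qed
  have "- real d + 2 \<le> p $ e (2*d-4)" using c1 x1 by (simp add: z_def zc_def)
  moreover have "p $ e (2*d-4) \<le> real d - 2" using cn x1 by (simp add: z_def zc_def)
  ultimately show ?thesis using A by blast
qed

theorem corollary5p15:
  fixes d :: nat and e :: "nat \<Rightarrow> 'n::finite"
  assumes "d \<ge> 3" and "bij_betw e {0..<2*d-3} (UNIV :: 'n set)"
  shows "Pd d e \<subseteq> {p. (\<forall>k<2*d-4. 0 \<le> p $ e k \<and> p $ e k \<le> 2 * real d - 4) \<and>
                          - real d + 2 \<le> p $ e (2*d-4) \<and> p $ e (2*d-4) \<le> real d - 2}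
         \<and> bounded (Pd d e) \<and> convex (Pd d e) \<and> polytope (Pd d e)
         \<and> finite (Pd d e \<inter> {p. \<forall>i. p $ i \<in> \<int>})"
proof -
  have sub: "Pd d e \<subseteq> {p. (\<forall>k<2*d-4. 0 \<le> p $ e k \<and> p $ e k \<le> 2 * real d - 4) \<and>
                          - real d + 2 \<le> p $ e (2*d-4) \<and> p $ e (2*d-4) \<le> real d - 2}"
    using box_Pd[OF assms(1)] by blast
  define M where "M = 2 * real d"
  have allb: "\<bar>p $ i\<bar> \<le> M" if "p \<in> Pd d e" for p i
  proof -
    have "i \<in> e ` {0..<2*d-3}" using assms(2) by (simp add: bij_betw_def)
    then obtain k where k: "k < 2*d-3" "i = e k" by auto
    show ?thesis
    proof (cases "k = 2*d-4")
      case True then show ?thesis using box_Pd[OF assms(1) that] k unfolding M_def by auto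
    next
      case False then have "k < 2*d-4" using k by simp
      then show ?thesis using box_Pd[OF assms(1) that] k unfolding M_def by force
    qed
  qed
  have bd: "bounded (Pd d e)"
  proof -
    have "Pd d e \<subseteq> cbox (- (\<chi> i. M)) (\<chi> i. M)"
    proof
      fix p assume "p \<in> Pd d e"
      then have "\<forall>i. - M \<le> p $ i \<and> p $ i \<le> M" using allb by (metis abs_le_iff minus_le_iff)
      then show "p \<in> cbox (- (\<chi> i. M)) (\<chi> i. M)" by (simp add: mem_box_cart)
    qed
    then show ?thesis using bounded_cbox bounded_subset by blast
  qed
  have ph: "polyhedron (Pd d e)" by (rule poly_Pd)
  have pt: "polytope (Pd d e)" using bd ph polytope_eq_bounded_polyhedron by blast
  have cv: "convex (Pd d e)" using ph polyhedron_imp_convex by blast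
  define R where "R = (real_of_int ` {-\<lceil>M\<rceil>..\<lceil>M\<rceil>})"
  have fin: "finite ((\<lambda>f. \<chi> i. f i) ` (PiE UNIV (\<lambda>_. R)))"
    unfolding R_def by (intro finite_imageI finite_PiE) auto
  have "Pd d e \<inter> {p. \<forall>i. p $ i \<in> \<int>} \<subseteq> (\<lambda>f. \<chi> i. f i) ` (PiE UNIV (\<lambda>_. R))"
  proof
    fix p assume pp: "p \<in> Pd d e \<inter> {p. \<forall>i. p $ i \<in> \<int>}"
    have "\<And>i. p $ i \<in> R"
    proof -
      fix i
      obtain m where m: "p $ i = real_of_int m" using pp Ints_cases by blast
      have "\<bar>real_of_int m\<bar> \<le> M" using allb[of p i] pp m by auto
      then have "m \<in> {-\<lceil>M\<rceil>..\<lceil>M\<rceil>}" by (auto simp: abs_le_iff) linarith+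
      then show "p $ i \<in> R" using m unfolding R_def by auto
    qed
    then have "(\<lambda>i. p $ i) \<in> PiE UNIV (\<lambda>_. R)" by auto
    moreover have "p = (\<chi> i. (\<lambda>i. p $ i) i)" by simp
    ultimately show "p \<in> (\<lambda>f. \<chi> i. f i) ` (PiE UNIV (\<lambda>_. R))" by blast
  qed
  then have "finite (Pd d e \<inter> {p. \<forall>i. p $ i \<in> \<int>})" using fin finite_subset by blast
  then show ?thesis using sub bd cv pt by blast
qed

end
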